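(* Let $R\in\mathbb R$ and let $f:[0,R)\to\mathbb R$ be continuously differentiable and satisfy (h1) $f(0)>0$, $f'(0)=-1$; (h2) $f'$ is strictly increasing and convex; (h3) $f(t)<0$ for some $t\in(0,R)$. Let $\beta:=\sup_{t\in[0,R)}-f(t)$ and $\bar t:=\sup\{t\in[0,R):f'(t)<0\}$. If $0\le\rho<\beta/2$, then $\rho<\bar t/2<\bar t$ and $f'(\rho)<0$. *)

theory Defs
  imports "HOL-Analysis.Analysis"
begin

end

theory Submission
  imports Defs
begin

lemma mono_helper:
  fixes g g' :: "real \<Rightarrow> real"
  assumes d: "\<And>t. t \<in> {0..<R} \<Longrightarrow> (g has_real_derivative g' t) (at t within {0..<R})"
    and ab: "0 \<le> a" "a \<le> b" "b < R"
    and nn: "\<And>x. a < x \<Longrightarrow> x < b \<Longrightarrow> g' x \<ge> 0"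
  shows "g a \<le> g b"
proof (rule DERIV_nonneg_imp_increasing_open[OF ab(2)])
  fix x assume x: "a < x" "x < b"
  have "x \<in> interior {0..<R}" using x ab by auto
  hence "at x within {0..<R} = at x" by (rule at_within_interior)
  moreover have "(g has_real_derivative g' x) (at x within {0..<R})" using d x ab by auto
  ultimately show "\<exists>y. DERIV g x :> y \<and> y \<ge> 0" using nn x by auto
next
  have "continuous_on {0..<R} g" by (rule DERIV_continuous_on[OF d])
  thus "continuous_on {a..b} g" by (rule continuous_on_subset) (use ab in auto)
qed

theorem proposition5p2:
  fixes f f' :: "real \<Rightarrow> real" and R \<rho> :: real
  assumes deriv: "\<And>t. t \<in> {0..<R} \<Longrightarrow> (f has_real_derivative f' t) (at t within {0..<R})"
    and cont: "continuous_on {0..<R} f'"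
    and h1: "f 0 > 0" "f' 0 = -1"
    and h2: "strict_mono_on {0..<R} f'" "convex_on {0..<R} f'"
    and h3: "\<exists>t\<in>{0<..<R}. f t < 0"
    and rho: "0 \<le> \<rho>" "\<rho> < (SUP t\<in>{0..<R}. - f t) / 2"
  shows "\<rho> < Sup {t\<in>{0..<R}. f' t < 0} / 2
         \<and> Sup {t\<in>{0..<R}. f' t < 0} / 2 < Sup {t\<in>{0..<R}. f' t < 0}
         \<and> f' \<rho> < 0"
proof -
  define T where "T = {t\<in>{0..<R}. f' t < 0}"
  obtain t0 where t0: "t0 \<in> {0<..<R}" "f t0 < 0" using h3 by auto
  have R0: "0 < R" using t0 by auto
  have T0: "0 \<in> T" using R0 h1 by (auto simp: T_def)
  have Tb: "bdd_above T" by (rule bdd_aboveI[of _ R]) (auto simp: T_def)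
  have Tup: "\<And>x. x \<in> T \<Longrightarrow> x \<le> Sup T" using Tb by (simp add: cSup_upper)
  have S0: "0 \<le> Sup T" using Tup T0 by auto
  have SR: "Sup T \<le> R" using T0 by (intro cSup_least) (auto simp: T_def)
  have fpge: "\<And>x. x \<in> {0..<R} \<Longrightarrow> f' x \<ge> -1"
    using strict_mono_on_leD[OF h2(1), of 0] h1 R0 by auto
  have low: "\<And>t. t \<in> {0..<R} \<Longrightarrow> f 0 - t \<le> f t"
  proof -
    fix t assume t: "t \<in> {0..<R}"
    have d2: "\<And>s. s \<in> {0..<R} \<Longrightarrow> ((\<lambda>s. f s + s) has_real_derivative f' s + 1) (at s within {0..<R})"
      by (auto intro!: derivative_eq_intros deriv)
    have "f 0 + 0 \<le> f t + t"
    proof (rule mono_helper[where g="\<lambda>s. f s + s", OF d2, of 0 t])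
      fix x assume "0 < x" "x < t"
      thus "0 \<le> f' x + 1" using fpge[of x] t by auto
    qed (use t in auto)
    thus "f 0 - t \<le> f t" by simp
  qed
  have key: "\<And>t. t \<in> {0..<R} \<Longrightarrow> - f t \<le> Sup T"
  proof -
    fix t assume t: "t \<in> {0..<R}"
    show "- f t \<le> Sup T"
    proof (cases "t \<le> Sup T")
      case True thus ?thesis using low[OF t] h1 by linarith
    next
      case False
      have st: "Sup T \<in> {0..<R}" using S0 False t by auto
      have "f (Sup T) \<le> f t"
      proof (rule mono_helper[OF deriv, of "Sup T" t])
        fix x assume x: "Sup T < x" "x < t"
        show "f' x \<ge> 0"
        proof (rule ccontr)
          assume "\<not> f' x \<ge> 0"
          hence "x \<in> T" using x S0 t by (auto simp: T_def)
          thus False using Tup x by force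
        qed
      qed (use S0 False t in auto)
      thus ?thesis using low[OF st] h1 by linarith
    qed
  qed
  have bdd: "bdd_above ((\<lambda>t. - f t) ` {0..<R})" using key by (intro bdd_aboveI2) auto
  have beta: "(SUP t\<in>{0..<R}. - f t) \<le> Sup T" using R0 key by (intro cSUP_least) auto
  have betapos: "- f t0 \<le> (SUP t\<in>{0..<R}. - f t)" using t0 by (intro cSUP_upper[OF _ bdd]) auto
  have Spos: "Sup T > 0" using beta betapos t0 by linarith
  have r1: "\<rho> < Sup T / 2" using rho beta by linarith
  have "\<rho> < Sup T" using r1 Spos by linarith
  then obtain s where s: "s \<in> T" "\<rho> < s" using less_cSupD[of T \<rho>] T0 by blast
  have "f' \<rho> < f' s" using s rho by (intro strict_mono_onD[OF h2(1)]) (auto simp: T_def)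
  hence "f' \<rho> < 0" using s by (auto simp: T_def)
  thus ?thesis using r1 Spos unfolding T_def[symmetric] by linarith
qed

end
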